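(* Let $H\in\mathbb{N}$, let $\{\mathcal{F}_h^k\}_{k\in\mathbb{N},h\in[H]}$ be a filtration that is increasing in the lexicographic order of $(k,h)$ (i.e. $\mathcal{F}_1^1\subseteq\mathcal{F}_2^1\subseteq\dots\subseteq\mathcal{F}_H^1\subseteq\mathcal{F}_1^2\subseteq\cdots$), and let $\{X_h^k\}$ be non-negative random variables with $X_h^k$ being $\mathcal{F}_h^k$-measurable. Let $c>0$ be a constant, and define recursively $J_{H+1}^k:=0$ and $J_h^k:=\big(X_h^k+\mathbb{E}[J_{h+1}^k\mid\mathcal{F}_h^k]\big)\wedge c$ for all $k\in\mathbb{N}$, $h\in[H]$. Then for any $\delta\in(0,1]$, with probability at least $1-\delta$, simultaneously for all $K\in\mathbb{N}$, $$\sum_{k=1}^KJ_1^k\le2\sum_{k=1}^K\sum_{h=1}^HX_h^k+6c\log\frac2\delta.$$ *)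

theory Defs
  imports "HOL-Probability.Probability"
begin

(* J M F X c H k h  =  J_h^k :  J_h^k = 0 for h > H (in particular J_{H+1}^k = 0),
   and J_h^k = min (X_h^k + E[J_{h+1}^k | F_h^k]) c  for h <= H.
   Indices: F k h = F_h^k, X k h = X_h^k. *)
function Jfun :: "'a measure \<Rightarrow> (nat \<Rightarrow> nat \<Rightarrow> 'a measure) \<Rightarrow> (nat \<Rightarrow> nat \<Rightarrow> 'a \<Rightarrow> real)
    \<Rightarrow> real \<Rightarrow> nat \<Rightarrow> nat \<Rightarrow> nat \<Rightarrow> 'a \<Rightarrow> real" where
  "Jfun M F X c H k h =
     (if H < h then (\<lambda>_. 0)
      else (\<lambda>\<omega>. min (X k h \<omega> + real_cond_exp M (F k h) (Jfun M F X c H k (Suc h)) \<omega>) c))"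
  by auto
termination
  by (relation "Wellfounded.measure (\<lambda>(M, F, X, c, H, k, h). Suc H - h)") auto

end

theory Submission
  imports Defs
begin

declare Jfun.simps[simp del]

lemma key_ineq:
  fixes x e c :: real
  assumes "0 \<le> x" "0 \<le> e" "e \<le> c" "0 < c"
  shows "exp (- x / c) * (1 - e / (2*c)) \<le> 1 - min (x + e) c / (2*c)"
proof -
  define u where "u = x / c"
  define v where "v = e / c"
  have u: "0 \<le> u" and v0: "0 \<le> v" and v1: "v \<le> 1" using assms by (auto simp: u_def v_def)
  have eu: "exp (- u) \<le> 1 / (1 + u)"
    using exp_ge_add_one_self[of u] u by (simp add: exp_minus field_simps)
  have lhs: "exp (- x / c) * (1 - e / (2*c)) = exp (-u) * (1 - v/2)"
    using assms by (simp add: u_def v_def field_simps)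
  have rhs: "min (x + e) c / (2*c) = min (u + v) 1 / 2"
    using assms by (auto simp: u_def v_def min_def field_simps)
  have "exp (-u) * (1 - v/2) \<le> (1 / (1 + u)) * (1 - v/2)"
    using eu v1 by (intro mult_right_mono) auto
  also have "\<dots> \<le> 1 - min (u + v) 1 / 2"
  proof (cases "u + v \<le> 1")
    case True
    have "u * (u + v) \<le> u * 1" using True u by (intro mult_left_mono) auto
    hence "(1 - v/2) \<le> (1 + u) * (1 - (u+v)/2)"
      by (simp add: algebra_simps)
    then show ?thesis using True u by (simp add: field_simps min_def)
  next
    case False
    then show ?thesis using u v0 by (simp add: field_simps min_def)
  qed
  finally show ?thesis using lhs rhs by simp
qed

lemma epi_ineq: "exp (t::real) * (1 - t) \<le> 1"
proof -
  have "1 - t \<le> exp (-t)" using exp_ge_add_one_self[of "-t"] by simp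
  hence "exp t * (1 - t) \<le> exp t * exp (-t)" by (intro mult_left_mono) auto
  thus ?thesis by (simp add: exp_minus)
qed

lemma meas_transfer:
  assumes "sets A \<subseteq> sets B" "space A = space B" "f \<in> borel_measurable A"
  shows "f \<in> borel_measurable B"
  using assms unfolding measurable_def by auto

locale epi =
  fixes M :: "'a measure" and F :: "nat \<Rightarrow> nat \<Rightarrow> 'a measure"
    and X :: "nat \<Rightarrow> nat \<Rightarrow> 'a \<Rightarrow> real" and H :: nat and c :: real
  assumes ps: "prob_space M"
    and subalg: "\<And>k h. 1 \<le> k \<Longrightarrow> 1 \<le> h \<Longrightarrow> h \<le> H \<Longrightarrow> subalgebra M (F k h)"
    and mono: "\<And>k h k' h'. 1 \<le> k \<Longrightarrow> 1 \<le> h \<Longrightarrow> h \<le> H \<Longrightarrow> 1 \<le> h' \<Longrightarrow> h' \<le> H \<Longrightarrow>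
                 (k < k' \<or> (k = k' \<and> h \<le> h')) \<Longrightarrow> sets (F k h) \<subseteq> sets (F k' h')"
    and meas: "\<And>k h. 1 \<le> k \<Longrightarrow> 1 \<le> h \<Longrightarrow> h \<le> H \<Longrightarrow> X k h \<in> borel_measurable (F k h)"
    and nonneg: "\<And>k h \<omega>. 1 \<le> k \<Longrightarrow> 1 \<le> h \<Longrightarrow> h \<le> H \<Longrightarrow> \<omega> \<in> space M \<Longrightarrow> 0 \<le> X k h \<omega>"
    and cpos: "c > 0"
begin

interpretation prob_space M by (rule ps)

abbreviation J where "J k h \<equiv> Jfun M F X c H k h"

lemma J_le: "h \<le> H \<Longrightarrow> J k h = (\<lambda>\<omega>. min (X k h \<omega> + real_cond_exp M (F k h) (J k (Suc h)) \<omega>) c)"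
  using Jfun.simps[of M F X c H k h] by simp

lemma J_gt: "H < h \<Longrightarrow> J k h = (\<lambda>_. 0)"
  using Jfun.simps[of M F X c H k h] by simp

lemma J_le_c: "J k h \<omega> \<le> c"
  by (cases "h \<le> H") (use J_le J_gt cpos in auto)

lemma sfs: "1 \<le> k \<Longrightarrow> 1 \<le> h \<Longrightarrow> h \<le> H \<Longrightarrow> sigma_finite_subalgebra M (F k h)"
  by (rule finite_measure_subalgebra_is_sigma_finite)
     (simp add: finite_measure_subalgebra_def finite_measure_subalgebra_axioms_def subalg finite_measure_axioms)

lemma spaceF: "1 \<le> k \<Longrightarrow> 1 \<le> h \<Longrightarrow> h \<le> H \<Longrightarrow> space (F k h) = space M"
  using subalg unfolding subalgebra_def by auto

lemma X_measM: "1 \<le> k \<Longrightarrow> 1 \<le> h \<Longrightarrow> h \<le> H \<Longrightarrow> X k h \<in> borel_measurable M"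
  using measurable_from_subalg[OF subalg meas] by auto

lemma J_meas: assumes "1 \<le> k" "1 \<le> h" "h \<le> H" shows "J k h \<in> borel_measurable (F k h)"
proof -
  have [measurable]: "X k h \<in> borel_measurable (F k h)" using meas assms by auto
  show ?thesis unfolding J_le[OF assms(3)] by measurable
qed

lemma J_measM: assumes "1 \<le> k" "1 \<le> h" shows "J k h \<in> borel_measurable M"
proof (cases "h \<le> H")
  case True then show ?thesis using measurable_from_subalg[OF subalg J_meas] assms by auto
next
  case False then show ?thesis using J_gt[of h k] by simp
qed

definition G where "G k h = (\<lambda>\<omega>. exp (- (\<Sum>h'=h..H. X k h' \<omega>) / c))"

lemma G_measM: assumes "1 \<le> k" "1 \<le> h" shows "G k h \<in> borel_measurable M"
proof -
  have [measurable]: "(\<lambda>\<omega>. \<Sum>h'=h..H. X k h' \<omega>) \<in> borel_measurable M"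
    by (rule borel_measurable_sum) (use X_measM assms in auto)
  show ?thesis unfolding G_def by measurable
qed

lemma G_bounds: assumes "1 \<le> k" "1 \<le> h" "\<omega> \<in> space M" shows "0 < G k h \<omega>" "G k h \<omega> \<le> 1"
proof -
  have "0 \<le> (\<Sum>h'=h..H. X k h' \<omega>)" using assms by (intro sum_nonneg nonneg) auto
  then show "0 < G k h \<omega>" "G k h \<omega> \<le> 1" using cpos unfolding G_def by auto
qed

lemma G_int: assumes "1 \<le> k" "1 \<le> h" shows "integrable M (G k h)"
proof -
  have "AE \<omega> in M. norm (G k h \<omega>) \<le> 1"
    by (rule AE_I2) (metis G_bounds(1,2)[OF assms] abs_of_pos real_norm_def)
  then show ?thesis using integrable_const_bound G_measM[OF assms] by blast
qed

lemma G_split: assumes "h \<le> H" shows "G k h = (\<lambda>\<omega>. exp (- X k h \<omega> / c) * G k (Suc h) \<omega>)"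
proof
  fix \<omega>
  have "- (\<Sum>h'=h..H. X k h' \<omega>) / c = - X k h \<omega> / c + - (\<Sum>h'=Suc h..H. X k h' \<omega>) / c"
    using assms cpos by (simp add: sum.atLeast_Suc_atMost[of h H]) (simp add: field_simps)
  then show "G k h \<omega> = exp (- X k h \<omega> / c) * G k (Suc h) \<omega>"
    unfolding G_def by (simp add: exp_add[symmetric])
qed

lemma G_top: "G k (Suc H) = (\<lambda>_. 1)"
  unfolding G_def by simp


lemma episode:
  assumes k: "1 \<le> k"
  shows "1 \<le> h \<Longrightarrow> h \<le> Suc H \<Longrightarrow> (AE \<omega> in M. 0 \<le> J k h \<omega>) \<and>
     (h \<le> H \<longrightarrow> (AE \<omega> in M. real_cond_exp M (F k h) (G k h) \<omega> \<le> 1 - J k h \<omega> / (2*c)))"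
proof (induction "Suc H - h" arbitrary: h)
  case 0
  then have "h = Suc H" by auto
  then show ?case using J_gt[of h k] by auto
next
  case (Suc m)
  then have h1: "1 \<le> h" and hH: "h \<le> H" by auto
  have IH: "(AE \<omega> in M. 0 \<le> J k (Suc h) \<omega>) \<and>
     (Suc h \<le> H \<longrightarrow> (AE \<omega> in M. real_cond_exp M (F k (Suc h)) (G k (Suc h)) \<omega> \<le> 1 - J k (Suc h) \<omega> / (2*c)))"
    using Suc by auto
  interpret S: sigma_finite_subalgebra M "F k h" using sfs k h1 hH by auto
  define e where "e = real_cond_exp M (F k h) (J k (Suc h))"
  have J1m: "J k (Suc h) \<in> borel_measurable M" using J_measM k by auto
  have J1pos: "AE \<omega> in M. 0 \<le> J k (Suc h) \<omega>" using IH by auto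
  have "AE \<omega> in M. norm (J k (Suc h) \<omega>) \<le> c"
    using J1pos proof eventually_elim
    case (elim \<omega>) then show ?case using J_le_c[of k "Suc h" \<omega>] by (simp add: abs_le_iff)
  qed
  then have J1int: "integrable M (J k (Suc h))"
    using integrable_const_bound J1m by blast
  have e0: "AE \<omega> in M. 0 \<le> e \<omega>" unfolding e_def
    by (rule S.real_cond_exp_ge_c[OF J1int J1pos])
  have e1: "AE \<omega> in M. e \<omega> \<le> c" unfolding e_def
    by (rule S.real_cond_exp_le_c[OF J1int]) (auto intro!: AE_I2 J_le_c)
  have Jh: "J k h = (\<lambda>\<omega>. min (X k h \<omega> + e \<omega>) c)" unfolding e_def by (rule J_le[OF hH])
  have Jpos: "AE \<omega> in M. 0 \<le> J k h \<omega>"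
    using e0 AE_space by eventually_elim (use nonneg[OF k h1 hH] cpos Jh in auto)
  have B: "AE \<omega> in M. real_cond_exp M (F k h) (G k (Suc h)) \<omega> \<le> 1 - e \<omega> / (2*c)"
  proof (cases "h = H")
    case True
    have a: "AE \<omega> in M. real_cond_exp M (F k h) (\<lambda>_. 1) \<omega> = 1"
      by (rule S.real_cond_exp_F_meas) auto
    have b: "AE \<omega> in M. real_cond_exp M (F k h) (\<lambda>_. 0) \<omega> = 0"
      by (rule S.real_cond_exp_F_meas) auto
    show ?thesis using a b unfolding e_def True G_top J_gt[OF lessI] by eventually_elim auto
  next
    case False
    then have sH: "Suc h \<le> H" using hH by auto
    have IH2: "AE \<omega> in M. real_cond_exp M (F k (Suc h)) (G k (Suc h)) \<omega> \<le> 1 - J k (Suc h) \<omega> / (2*c)"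
      using IH sH by auto
    interpret S1: sigma_finite_subalgebra M "F k (Suc h)" using sfs k sH by auto
    have sub: "subalgebra (F k (Suc h)) (F k h)"
      unfolding subalgebra_def using mono[OF k h1 hH, of "Suc h" k] sH spaceF k h1 hH by auto
    have Gi: "integrable M (G k (Suc h))" using G_int k by auto
    have int2: "integrable M (\<lambda>\<omega>. 1 - J k (Suc h) \<omega> / (2*c))"
      using J1int by auto
    have m1: "AE \<omega> in M. real_cond_exp M (F k h) (real_cond_exp M (F k (Suc h)) (G k (Suc h))) \<omega>
               \<le> real_cond_exp M (F k h) (\<lambda>\<omega>. 1 - J k (Suc h) \<omega> / (2*c)) \<omega>"
      by (rule S.real_cond_exp_mono[OF IH2 S1.real_cond_exp_int(1)[OF Gi] int2])
    have t: "AE \<omega> in M. real_cond_exp M (F k h) (real_cond_exp M (F k (Suc h)) (G k (Suc h))) \<omega>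
               = real_cond_exp M (F k h) (G k (Suc h)) \<omega>"
      by (rule S.real_cond_exp_nested_subalg[OF S1.subalg sub Gi])
    have l1: "AE \<omega> in M. real_cond_exp M (F k h) (\<lambda>\<omega>. 1 - J k (Suc h) \<omega> / (2*c)) \<omega>
              = real_cond_exp M (F k h) (\<lambda>_. 1) \<omega> - real_cond_exp M (F k h) (\<lambda>\<omega>. J k (Suc h) \<omega> / (2*c)) \<omega>"
      by (rule S.real_cond_exp_diff) (use J1int in auto)
    have l2: "AE \<omega> in M. real_cond_exp M (F k h) (\<lambda>_. 1) \<omega> = 1"
      by (rule S.real_cond_exp_F_meas) auto
    have l3: "AE \<omega> in M. real_cond_exp M (F k h) (\<lambda>\<omega>. J k (Suc h) \<omega> / (2*c)) \<omega> = e \<omega> / (2*c)"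
      unfolding e_def by (rule S.real_cond_exp_cdiv[OF J1int])
    show ?thesis using m1 t l1 l2 l3 by eventually_elim auto
  qed
  have Xm: "(\<lambda>\<omega>. exp (- X k h \<omega> / c)) \<in> borel_measurable (F k h)"
  proof -
    have [measurable]: "X k h \<in> borel_measurable (F k h)" using meas k h1 hH by auto
    show ?thesis by measurable
  qed
  have Q0: "AE \<omega> in M. real_cond_exp M (F k h) (\<lambda>\<omega>. exp (- X k h \<omega> / c) * G k (Suc h) \<omega>) \<omega>
             = exp (- X k h \<omega> / c) * real_cond_exp M (F k h) (G k (Suc h)) \<omega>"
    by (rule S.real_cond_exp_mult[OF Xm G_measM]) (use k G_int[OF k h1] G_split[OF hH] in auto)
  have Q: "AE \<omega> in M. real_cond_exp M (F k h) (G k h) \<omega> \<le> 1 - J k h \<omega> / (2*c)"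
    using Q0 B e0 e1 AE_space
  proof eventually_elim
    case (elim \<omega>)
    have x0: "0 \<le> X k h \<omega>" using nonneg[OF k h1 hH] elim by auto
    have "real_cond_exp M (F k h) (G k h) \<omega> = exp (- X k h \<omega> / c) * real_cond_exp M (F k h) (G k (Suc h)) \<omega>"
      using elim G_split[OF hH] by simp
    also have "\<dots> \<le> exp (- X k h \<omega> / c) * (1 - e \<omega> / (2*c))"
      using elim by (intro mult_left_mono) auto
    also have "\<dots> \<le> 1 - min (X k h \<omega> + e \<omega>) c / (2*c)"
      using key_ineq[OF x0 _ _ cpos] elim by auto
    finally show ?case using Jh by simp
  qed
  show ?case using Jpos Q by auto
qed

definition D where "D k = (\<lambda>\<omega>. exp (J k 1 \<omega> / (2*c)) * G k 1 \<omega>)"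

lemma D_bounds: assumes "1 \<le> k" "\<omega> \<in> space M" shows "0 < D k \<omega>" "D k \<omega> \<le> exp (1/2)"
proof -
  have "J k 1 \<omega> / (2*c) \<le> 1/2" using J_le_c[of k 1 \<omega>] cpos by (simp add: field_simps)
  then have "exp (J k 1 \<omega> / (2*c)) \<le> exp (1/2)" by simp
  moreover have "0 < G k 1 \<omega>" "G k 1 \<omega> \<le> 1" using G_bounds assms by auto
  ultimately show "0 < D k \<omega>" "D k \<omega> \<le> exp (1/2)" unfolding D_def
    using mult_mono[of "exp (J k 1 \<omega> / (2*c))" "exp (1/2)" "G k 1 \<omega>" 1] by auto
qed

lemma D_measM: "1 \<le> k \<Longrightarrow> D k \<in> borel_measurable M"
  unfolding D_def using J_measM[of k 1] G_measM[of k 1] by measurable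

lemma super_step:
  assumes k: "1 \<le> k" and H1: "1 \<le> H" and fm: "f \<in> borel_measurable (F k 1)"
    and fb: "\<And>\<omega>. \<omega> \<in> space M \<Longrightarrow> 0 \<le> f \<omega> \<and> f \<omega> \<le> B"
  shows "integrable M (\<lambda>\<omega>. f \<omega> * D k \<omega>)" "(\<integral>\<omega>. f \<omega> * D k \<omega> \<partial>M) \<le> (\<integral>\<omega>. f \<omega> \<partial>M)"
proof -
  interpret S: sigma_finite_subalgebra M "F k 1" using sfs k H1 by auto
  define u where "u = (\<lambda>\<omega>. f \<omega> * exp (J k 1 \<omega> / (2*c)))"
  have Jm [measurable]: "J k 1 \<in> borel_measurable (F k 1)" using J_meas k H1 by auto
  have fm' [measurable]: "f \<in> borel_measurable (F k 1)" by (rule fm)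
  have um: "u \<in> borel_measurable (F k 1)" unfolding u_def by measurable
  have umM: "u \<in> borel_measurable M" using measurable_from_subalg[OF S.subalg um] .
  have fmM: "f \<in> borel_measurable M" using measurable_from_subalg[OF S.subalg fm] .
  have Gm: "G k 1 \<in> borel_measurable M" using G_measM k by auto
  have eq: "\<And>\<omega>. f \<omega> * D k \<omega> = u \<omega> * G k 1 \<omega>" unfolding u_def D_def by simp
  have ub: "\<And>\<omega>. \<omega> \<in> space M \<Longrightarrow> 0 \<le> u \<omega> \<and> u \<omega> \<le> B * exp (1/2)"
  proof -
    fix \<omega> assume w: "\<omega> \<in> space M"
    have "J k 1 \<omega> / (2*c) \<le> 1/2" using J_le_c[of k 1 \<omega>] cpos by (simp add: field_simps)
    then have "exp (J k 1 \<omega> / (2*c)) \<le> exp (1/2)" by simp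
    then show "0 \<le> u \<omega> \<and> u \<omega> \<le> B * exp (1/2)" unfolding u_def using fb[OF w]
      by (auto intro!: mult_mono)
  qed
  have uG: "integrable M (\<lambda>\<omega>. u \<omega> * G k 1 \<omega>)"
  proof -
    have "AE \<omega> in M. norm (u \<omega> * G k 1 \<omega>) \<le> B * exp (1/2)"
    proof (rule AE_I2)
      fix \<omega> assume w: "\<omega> \<in> space M"
      have "0 < G k 1 \<omega>" "G k 1 \<omega> \<le> 1" using G_bounds k w by auto
      then show "norm (u \<omega> * G k 1 \<omega>) \<le> B * exp (1/2)" using ub[OF w]
        by (simp add: abs_mult) (metis abs_of_nonneg abs_of_pos mult_mono mult.right_neutral less_imp_le order_trans mult_nonneg_nonneg exp_ge_zero)
    qed
    then show ?thesis using integrable_const_bound[of "\<lambda>\<omega>. u \<omega> * G k 1 \<omega>"] umM Gm by auto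
  qed
  show i1: "integrable M (\<lambda>\<omega>. f \<omega> * D k \<omega>)" using uG eq by simp
  have ce1: "integrable M (\<lambda>\<omega>. u \<omega> * real_cond_exp M (F k 1) (G k 1) \<omega>)"
    and ce2: "(\<integral>\<omega>. u \<omega> * real_cond_exp M (F k 1) (G k 1) \<omega> \<partial>M) = (\<integral>\<omega>. u \<omega> * G k 1 \<omega> \<partial>M)"
    using S.real_cond_exp_intg[OF uG um Gm] by auto
  have fi: "integrable M f"
  proof -
    have "AE \<omega> in M. norm (f \<omega>) \<le> B" by (rule AE_I2) (use fb in auto)
    then show ?thesis using integrable_const_bound fmM by blast
  qed
  have ep: "(AE \<omega> in M. 0 \<le> J k 1 \<omega>) \<and> (1 \<le> H \<longrightarrow> (AE \<omega> in M. real_cond_exp M (F k 1) (G k 1) \<omega> \<le> 1 - J k 1 \<omega> / (2*c)))"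
    using episode[OF k, of 1] H1 by auto
  have ep2: "AE \<omega> in M. real_cond_exp M (F k 1) (G k 1) \<omega> \<le> 1 - J k 1 \<omega> / (2*c)"
    using ep H1 by auto
  have ep1: "AE \<omega> in M. 0 \<le> J k 1 \<omega>" using ep by auto
  have "AE \<omega> in M. u \<omega> * real_cond_exp M (F k 1) (G k 1) \<omega> \<le> f \<omega>"
    using ep1 ep2 AE_space
  proof eventually_elim
    case (elim \<omega>)
    have "u \<omega> * real_cond_exp M (F k 1) (G k 1) \<omega> \<le> u \<omega> * (1 - J k 1 \<omega> / (2*c))"
      using elim ub by (intro mult_left_mono) auto
    also have "\<dots> = f \<omega> * (exp (J k 1 \<omega> / (2*c)) * (1 - J k 1 \<omega> / (2*c)))" unfolding u_def by simp
    also have "\<dots> \<le> f \<omega> * 1" using epi_ineq fb elim by (intro mult_left_mono) auto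
    finally show ?case by simp
  qed
  then have "(\<integral>\<omega>. u \<omega> * real_cond_exp M (F k 1) (G k 1) \<omega> \<partial>M) \<le> (\<integral>\<omega>. f \<omega> \<partial>M)"
    using integral_mono_AE[OF ce1 fi] by auto
  then show "(\<integral>\<omega>. f \<omega> * D k \<omega> \<partial>M) \<le> (\<integral>\<omega>. f \<omega> \<partial>M)" using ce2 eq by simp
qed

lemma to_Fk1: assumes "1 \<le> j" "j < k" "1 \<le> h" "h \<le> H" "f \<in> borel_measurable (F j h)"
  shows "f \<in> borel_measurable (F k 1)"
proof (rule meas_transfer[OF _ _ assms(5)])
  show "sets (F j h) \<subseteq> sets (F k 1)" using mono[where k=j and h=h and k'=k and h'=1] assms by auto
  show "space (F j h) = space (F k 1)" using spaceF assms by auto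
qed

lemma D_meas_Fk1: assumes "1 \<le> j" "j < k" "1 \<le> H" shows "D j \<in> borel_measurable (F k 1)"
proof -
  have [measurable]: "J j 1 \<in> borel_measurable (F k 1)"
    using to_Fk1[OF assms(1,2) _ assms(3) J_meas[OF assms(1) _ assms(3)]] by auto
  have [measurable]: "(\<lambda>\<omega>. \<Sum>h'=1..H. X j h' \<omega>) \<in> borel_measurable (F k 1)"
    by (rule borel_measurable_sum) (use to_Fk1[OF assms(1,2)] meas assms in auto)
  show ?thesis unfolding D_def G_def by measurable
qed

fun W :: "real \<Rightarrow> nat \<Rightarrow> 'a \<Rightarrow> real" where
  "W a 0 \<omega> = 1"
| "W a (Suc n) \<omega> = (if W a n \<omega> < a then W a n \<omega> * D (Suc n) \<omega> else W a n \<omega>)"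

lemma W_meas: assumes "1 \<le> H" shows "n < k \<Longrightarrow> W a n \<in> borel_measurable (F k 1)"
proof (induction n)
  case 0 then show ?case by simp
next
  case (Suc n)
  then have [measurable]: "W a n \<in> borel_measurable (F k 1)" by auto
  have [measurable]: "D (Suc n) \<in> borel_measurable (F k 1)" using D_meas_Fk1 Suc assms by auto
  have "W a (Suc n) = (\<lambda>\<omega>. if W a n \<omega> < a then W a n \<omega> * D (Suc n) \<omega> else W a n \<omega>)" by auto
  also have "\<dots> \<in> borel_measurable (F k 1)" by measurable
  finally show ?case .
qed

lemma W_measM: assumes "1 \<le> H" shows "W a n \<in> borel_measurable M"
  using measurable_from_subalg[OF subalg W_meas[OF assms, of n "Suc n"]] assms by auto

lemma W_bounds: assumes "1 \<le> a" "\<omega> \<in> space M" shows "0 \<le> W a n \<omega> \<and> W a n \<omega> \<le> a * exp (1/2)"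
proof (induction n)
  case 0
  have "1 \<le> exp (1/2::real)" by simp
  then have "1 * 1 \<le> a * exp (1/2)" using assms by (intro mult_mono) auto
  then show ?case by simp
next
  case (Suc n)
  have d: "0 < D (Suc n) \<omega>" "D (Suc n) \<omega> \<le> exp (1/2)" using D_bounds assms by auto
  show ?case
  proof (cases "W a n \<omega> < a")
    case True
    then have "W a n \<omega> * D (Suc n) \<omega> \<le> a * exp (1/2)" using Suc d by (intro mult_mono) auto
    then show ?thesis using True Suc d by auto
  next
    case False then show ?thesis using Suc by auto
  qed
qed

lemma W_int: assumes "1 \<le> H" "1 \<le> a" shows "integrable M (W a n)"
proof -
  have "AE \<omega> in M. norm (W a n \<omega>) \<le> a * exp (1/2)" by (rule AE_I2) (use W_bounds assms in auto)
  then show ?thesis using integrable_const_bound W_measM[OF assms(1)] by blast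
qed

lemma W_exp: assumes "1 \<le> H" "1 \<le> a" shows "(\<integral>\<omega>. W a n \<omega> \<partial>M) \<le> 1"
proof (induction n)
  case 0 then show ?case by simp
next
  case (Suc n)
  define f where "f = (\<lambda>\<omega>. if W a n \<omega> < a then W a n \<omega> else 0)"
  have [measurable]: "W a n \<in> borel_measurable (F (Suc n) 1)" using W_meas assms by auto
  have fm: "f \<in> borel_measurable (F (Suc n) 1)" unfolding f_def by measurable
  have fb: "\<And>\<omega>. \<omega> \<in> space M \<Longrightarrow> 0 \<le> f \<omega> \<and> f \<omega> \<le> a"
    unfolding f_def using W_bounds assms by auto
  note ss = super_step[OF _ assms(1) fm fb]
  have fmM: "f \<in> borel_measurable M" using measurable_from_subalg[OF subalg fm] assms by auto
  have fi: "integrable M f"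
  proof -
    have "AE \<omega> in M. norm (f \<omega>) \<le> a" by (rule AE_I2) (use fb in auto)
    then show ?thesis using integrable_const_bound fmM by blast
  qed
  have eq: "W a (Suc n) = (\<lambda>\<omega>. f \<omega> * D (Suc n) \<omega> + (W a n \<omega> - f \<omega>))"
    unfolding f_def by auto
  have "(\<integral>\<omega>. W a (Suc n) \<omega> \<partial>M) = (\<integral>\<omega>. f \<omega> * D (Suc n) \<omega> \<partial>M) + ((\<integral>\<omega>. W a n \<omega> \<partial>M) - (\<integral>\<omega>. f \<omega> \<partial>M))"
    unfolding eq using ss(1) W_int[OF assms] fi by simp
  also have "\<dots> \<le> (\<integral>\<omega>. W a n \<omega> \<partial>M)" using ss(2) by simp
  finally show ?case using Suc by simp
qed

lemma W_inv: assumes "\<omega> \<in> space M" shows "a \<le> W a n \<omega> \<or> W a n \<omega> = (\<Prod>k=1..n. D k \<omega>)"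
proof (induction n)
  case 0 then show ?case by simp
next
  case (Suc n)
  then show ?case by (auto simp: prod.nat_ivl_Suc' mult.commute)
qed

lemma W_mono: "a \<le> W a n \<omega> \<Longrightarrow> n \<le> m \<Longrightarrow> a \<le> W a m \<omega>"
proof (induction m)
  case 0 then show ?case by simp
next
  case (Suc m)
  then show ?case by (cases "n = Suc m") (auto simp: not_less)
qed

end

theorem lemma2:
  fixes M :: "'a measure" and F :: "nat \<Rightarrow> nat \<Rightarrow> 'a measure"
    and X :: "nat \<Rightarrow> nat \<Rightarrow> 'a \<Rightarrow> real" and H :: nat and c \<delta> :: real
  assumes "prob_space M"
    and subalg: "\<And>k h. 1 \<le> k \<Longrightarrow> 1 \<le> h \<Longrightarrow> h \<le> H \<Longrightarrow> subalgebra M (F k h)"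
    and mono: "\<And>k h k' h'. 1 \<le> k \<Longrightarrow> 1 \<le> h \<Longrightarrow> h \<le> H \<Longrightarrow> 1 \<le> h' \<Longrightarrow> h' \<le> H \<Longrightarrow>
                 (k < k' \<or> (k = k' \<and> h \<le> h')) \<Longrightarrow> sets (F k h) \<subseteq> sets (F k' h')"
    and meas: "\<And>k h. 1 \<le> k \<Longrightarrow> 1 \<le> h \<Longrightarrow> h \<le> H \<Longrightarrow> X k h \<in> borel_measurable (F k h)"
    and nonneg: "\<And>k h \<omega>. 1 \<le> k \<Longrightarrow> 1 \<le> h \<Longrightarrow> h \<le> H \<Longrightarrow> \<omega> \<in> space M \<Longrightarrow> 0 \<le> X k h \<omega>"
    and "c > 0"
    and "0 < \<delta>" and "\<delta> \<le> 1"
  shows "measure M {\<omega> \<in> space M. \<forall>K::nat.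
           (\<Sum>k=1..K. Jfun M F X c H k 1 \<omega>)
             \<le> 2 * (\<Sum>k=1..K. \<Sum>h=1..H. X k h \<omega>) + 6 * c * ln (2 / \<delta>)} \<ge> 1 - \<delta>"
proof -
  interpret prob_space M by fact
  have cpos: "0 < c" and d0: "0 < \<delta>" and d1: "\<delta> \<le> 1" by fact+
  define L where "L = ln (2 / \<delta>)"
  define a where "a = 1 / \<delta>"
  have a1: "1 \<le> a" using d0 d1 by (simp add: a_def)
  have lna: "0 \<le> ln a" using a1 by simp
  have La: "ln a \<le> L" unfolding L_def a_def using d0 by (subst ln_le_cancel_iff) (auto simp: divide_right_mono)
  define Gd where "Gd = {\<omega> \<in> space M. \<forall>K::nat.
           (\<Sum>k=1..K. Jfun M F X c H k 1 \<omega>)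
             \<le> 2 * (\<Sum>k=1..K. \<Sum>h=1..H. X k h \<omega>) + 6 * c * ln (2 / \<delta>)}"
  show ?thesis
  proof (cases "H = 0")
    case True
    have "\<And>k. Jfun M F X c H k 1 = (\<lambda>_. 0)" using Jfun.simps[of M F X c H _ 1] True by simp
    moreover have "0 \<le> L" using lna La by simp
    ultimately have "Gd = space M" unfolding Gd_def L_def using True cpos by auto
    then show ?thesis unfolding Gd_def[symmetric] using d0 prob_space by simp
  next
    case False
    then have H1: "1 \<le> H" by simp
    interpret E: epi M F X H c by (rule epi.intro[OF assms(1-6)])
    define U where "U n = {\<omega> \<in> space M. a \<le> E.W a n \<omega>}" for n
    have Wm [measurable]: "\<And>n. E.W a n \<in> borel_measurable M" using E.W_measM H1 by auto
    have Um: "U n \<in> sets M" for n unfolding U_def by measurable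
    have inc: "incseq U" by (rule incseq_SucI) (auto simp: U_def intro: E.W_mono)
    have Ub: "measure M (U n) \<le> \<delta>" for n
    proof -
      have "measure M (U n) \<le> (\<integral>\<omega>. E.W a n \<omega> \<partial>M) / a"
        unfolding U_def
        by (rule integral_Markov_inequality_measure[OF E.W_int[OF H1 a1] sets.top])
           (use E.W_bounds[OF a1] a1 in \<open>auto intro!: AE_I2\<close>)
      also have "\<dots> \<le> 1 / a" using E.W_exp[OF H1 a1, of n] a1 by (intro divide_right_mono) auto
      finally show ?thesis using d0 by (simp add: a_def)
    qed
    have "(\<lambda>n. measure M (U n)) \<longlonglongrightarrow> measure M (\<Union>n. U n)"
      by (rule finite_Lim_measure_incseq) (use Um inc in auto)
    then have UU: "measure M (\<Union>n. U n) \<le> \<delta>" by (rule LIMSEQ_le_const2) (use Ub in auto)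
    have sub: "space M - (\<Union>n. U n) \<subseteq> Gd"
    proof
      fix \<omega> assume w: "\<omega> \<in> space M - (\<Union>n. U n)"
      then have ws: "\<omega> \<in> space M" and nW: "\<And>n. \<not> a \<le> E.W a n \<omega>" by (auto simp: U_def)
      have "(\<Sum>k=1..K. Jfun M F X c H k 1 \<omega>) \<le> 2 * (\<Sum>k=1..K. \<Sum>h=1..H. X k h \<omega>) + 6 * c * ln (2 / \<delta>)" for K
      proof (rule ccontr)
        assume nK: "\<not> ?thesis"
        define A where "A = (\<Sum>k=1..K. Jfun M F X c H k 1 \<omega>)"
        define B where "B = (\<Sum>k=1..K. \<Sum>h=1..H. X k h \<omega>)"
        have Dk: "E.D k \<omega> = exp (Jfun M F X c H k 1 \<omega> / (2*c) - (\<Sum>h=1..H. X k h \<omega>) / c)" for k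
          unfolding E.D_def E.G_def by (simp add: exp_diff exp_minus field_simps)
        have "(\<Prod>k=1..K. E.D k \<omega>) = exp (\<Sum>k=1..K. Jfun M F X c H k 1 \<omega> / (2*c) - (\<Sum>h=1..H. X k h \<omega>) / c)"
          unfolding Dk by (simp add: exp_sum)
        also have "(\<Sum>k=1..K. Jfun M F X c H k 1 \<omega> / (2*c) - (\<Sum>h=1..H. X k h \<omega>) / c) = A / (2*c) - B / c"
          unfolding A_def B_def by (simp add: sum_subtractf sum_divide_distrib)
        finally have P: "(\<Prod>k=1..K. E.D k \<omega>) = exp (A / (2*c) - B / c)" .
        have "A > 2 * B + 6 * c * L" using nK unfolding A_def B_def L_def by simp
        then have "A / (2*c) - B / c > 3 * L" using cpos by (simp add: field_simps)
        then have "A / (2*c) - B / c \<ge> ln a" using La lna by linarith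
        then have "exp (A / (2*c) - B / c) \<ge> exp (ln a)" by simp
        then have "(\<Prod>k=1..K. E.D k \<omega>) \<ge> a" using P a1 by simp
        then have "a \<le> E.W a K \<omega>" using E.W_inv[OF ws, of a K] by auto
        then show False using nW by auto
      qed
      then show "\<omega> \<in> Gd" using ws unfolding Gd_def by auto
    qed
    have s1 [measurable]: "(\<lambda>\<omega>. \<Sum>k=1..K. Jfun M F X c H k 1 \<omega>) \<in> borel_measurable M" for K
      by (rule borel_measurable_sum) (use E.J_measM in auto)
    have s2 [measurable]: "(\<lambda>\<omega>. \<Sum>k=1..K. \<Sum>h=1..H. X k h \<omega>) \<in> borel_measurable M" for K
      by (intro borel_measurable_sum) (use E.X_measM in auto)
    have Gdm: "Gd \<in> sets M" unfolding Gd_def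
      by (rule sets.sets_Collect_countable_All) measurable
    have "measure M (space M - (\<Union>n. U n)) = 1 - measure M (\<Union>n. U n)"
      by (rule prob_compl) (use Um in auto)
    also have "\<dots> \<ge> 1 - \<delta>" using UU by simp
    moreover have "measure M (space M - (\<Union>n. U n)) \<le> measure M Gd"
      by (rule finite_measure_mono[OF sub Gdm])
    ultimately show ?thesis unfolding Gd_def[symmetric] by simp
  qed
qed

end
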